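(* Let $n\ge 2$ be an integer and let $G_n=\langle a,b \mid (ab)^n\rangle$. For every rational number $s\in[1/n,1]$ and every nonzero integer $t$, the element $u_s$ is not conjugate in $G_n$ to $a^t$ nor to $b^t$. (That is, $\alpha_s$ is not peripheral in the even Heckoid orbifold of index $n$ for the trivial knot.)
   Context: Words $u_s\in F(a,b)$ for rational $0<s\le1$: write $s=q/p$ with $p\ge1$, $\gcd(p,q)=1$, and set $\epsilon_i=(-1)^{\lfloor iq/p\rfloor}$ for $1\le i\le p-1$. If $p$ is odd, $u_{q/p}=a\,\hat u\, b^{(-1)^q}\,\hat u^{-1}$ with $\hat u=b^{\epsilon_1}a^{\epsilon_2}\cdots b^{\epsilon_{p-2}}a^{\epsilon_{p-1}}$ (letters alternate $b,a,\dots$; empty if $p=1$). If $p$ is even, $u_{q/p}=a\,\hat u\,a^{-1}\,\hat u^{-1}$ with $\hat u=b^{\epsilon_1}a^{\epsilon_2}\cdots a^{\epsilon_{p-2}}b^{\epsilon_{p-1}}$. The generators $a,b$ are meridians; a loop is peripheral iff it represents the conjugacy class of a power of a meridian. *)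

theory Defs
  imports Complex_Main
begin

text \<open>Words in the free group F(a,b). A letter is a generator together with a sign
  (True = the generator, False = its inverse).\<close>

datatype gen = GA | GB

type_synonym letter = "gen \<times> bool"
type_synonym word = "letter list"

definition inv_letter :: "letter \<Rightarrow> letter" where
  "inv_letter l = (fst l, \<not> snd l)"

definition inv_word :: "word \<Rightarrow> word" where
  "inv_word w = rev (map inv_letter w)"

definition gpow :: "gen \<Rightarrow> int \<Rightarrow> word" where
  "gpow x t = replicate (nat \<bar>t\<bar>) (x, t \<ge> 0)"

definition relator :: "nat \<Rightarrow> word" where
  "relator n = concat (replicate n [(GA, True), (GB, True)])"

inductive Gstep :: "nat \<Rightarrow> word \<Rightarrow> word \<Rightarrow> bool" for n where
  ins_pair: "Gstep n (x @ y) (x @ [l, inv_letter l] @ y)"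
| ins_rel: "Gstep n (x @ y) (x @ relator n @ y)"

definition Geq :: "nat \<Rightarrow> word \<Rightarrow> word \<Rightarrow> bool" where
  "Geq n = (sup (Gstep n) (Gstep n)\<inverse>\<inverse>)\<^sup>*\<^sup>*"

definition Gconj :: "nat \<Rightarrow> word \<Rightarrow> word \<Rightarrow> bool" where
  "Gconj n u v = (\<exists>g. Geq n (g @ u @ inv_word g) v)"

text \<open>The words u_s. For s = q/p in lowest terms (p \<ge> 1), epsilon_i = (-1)^floor(iq/p);
  hat u has letters b^eps1 a^eps2 b^eps3 ..., i = 1..p-1 (b at odd i, a at even i).\<close>
definition eps :: "int \<Rightarrow> int \<Rightarrow> nat \<Rightarrow> bool" where
  "eps q p i = even ((int i * q) div p)"

definition uhat :: "int \<Rightarrow> int \<Rightarrow> word" where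
  "uhat q p = map (\<lambda>i. (if odd i then GB else GA, eps q p i)) [1..<nat p]"

definition u_word :: "rat \<Rightarrow> word" where
  "u_word s = (let (q, p) = quotient_of s in
     if odd p then [(GA, True)] @ uhat q p @ [(GB, even q)] @ inv_word (uhat q p)
     else [(GA, True)] @ uhat q p @ [(GA, False)] @ inv_word (uhat q p))"

end

theory Submission
  imports Defs
begin

definition sig :: "gen \<Rightarrow> word \<Rightarrow> int" where
  "sig x w = sum_list (map (\<lambda>l. if fst l = x then (if snd l then 1 else -1) else 0) w)"

lemma sig_append[simp]: "sig x (u @ v) = sig x u + sig x v"
  by (simp add: sig_def)

lemma sig_Nil[simp]: "sig x [] = 0" by (simp add: sig_def)

lemma sig_Cons[simp]: "sig x (l # w) = (if fst l = x then (if snd l then 1 else -1) else 0) + sig x w"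
  by (simp add: sig_def)

lemma sig_inv[simp]: "sig x (inv_word w) = - sig x w"
  by (induction w) (auto simp: inv_word_def inv_letter_def)

lemma sig_rel: "sig x (relator n) = int n"
  by (induction n) (cases x; auto simp: relator_def)+

lemma sig_gpow: "sig x (gpow y t) = (if x = y then t else 0)"
  by (auto simp: gpow_def sig_def sum_list_replicate)

definition inv3 :: "nat \<Rightarrow> word \<Rightarrow> int \<times> int \<times> int" where
  "inv3 n w = (sig GA w - sig GB w, sig GA w mod int n, sig GB w mod int n)"

lemma modn: "(a + (int n + b)) mod int n = (a + b) mod int n"
proof -
  have "a + (int n + b) = (a + b) + int n" by simp
  then show ?thesis by (metis mod_add_self2)
qed

lemma step_inv: "Gstep n u v \<Longrightarrow> inv3 n u = inv3 n v"
  by (induction rule: Gstep.induct) (auto simp: inv3_def sig_rel inv_letter_def modn)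

lemma Geq_inv: "Geq n u v \<Longrightarrow> inv3 n u = inv3 n v"
  unfolding Geq_def
proof (induction rule: rtranclp_induct)
  case base then show ?case by simp
next
  case (step y z) then show ?case using step_inv by (metis conversepD sup2E)
qed

lemma conj_inv: "Gconj n u v \<Longrightarrow> inv3 n u = inv3 n v"
proof -
  assume "Gconj n u v"
  then obtain g where "Geq n (g @ u @ inv_word g) v" by (auto simp: Gconj_def)
  then have "inv3 n (g @ u @ inv_word g) = inv3 n v" by (rule Geq_inv)
  then show ?thesis by (simp add: inv3_def)
qed

theorem theorem2p2:
  fixes n :: nat and s :: rat and t :: int
  assumes "n \<ge> 2" and "1 / of_nat n \<le> s" and "s \<le> 1" and "t \<noteq> 0"
  shows "\<not> Gconj n (u_word s) (gpow GA t) \<and> \<not> Gconj n (u_word s) (gpow GB t)"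
proof -
  obtain q p where qp: "quotient_of s = (q, p)" by (cases "quotient_of s") auto
  have n1: "int n \<ge> 2" using assms(1) by simp
  have m1: "(1::int) mod int n = 1" using n1 by simp
  have m2: "(-1::int) mod int n \<noteq> 0"
  proof
    assume "(-1::int) mod int n = 0"
    then have "int n dvd 1" by (metis dvd_minus_iff mod_0_imp_dvd)
    then show False using n1 by simp
  qed
  show ?thesis
  proof (cases "odd p")
    case True
    then have u: "u_word s = [(GA, True)] @ uhat q p @ [(GB, even q)] @ inv_word (uhat q p)"
      by (simp add: u_word_def qp)
    show ?thesis
    proof (intro conjI notI)
      assume "Gconj n (u_word s) (gpow GA t)"
      then have "inv3 n (u_word s) = inv3 n (gpow GA t)" by (rule conj_inv)
      then show False using m2 by (auto simp: u inv3_def sig_gpow split: if_splits)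
    next
      assume "Gconj n (u_word s) (gpow GB t)"
      then have "inv3 n (u_word s) = inv3 n (gpow GB t)" by (rule conj_inv)
      then show False using m1 by (auto simp: u inv3_def sig_gpow split: if_splits)
    qed
  next
    case False
    then have u: "u_word s = [(GA, True)] @ uhat q p @ [(GA, False)] @ inv_word (uhat q p)"
      by (simp add: u_word_def qp)
    show ?thesis
    proof (intro conjI notI)
      assume "Gconj n (u_word s) (gpow GA t)"
      then have "inv3 n (u_word s) = inv3 n (gpow GA t)" by (rule conj_inv)
      then show False using assms(4) by (auto simp: u inv3_def sig_gpow)
    next
      assume "Gconj n (u_word s) (gpow GB t)"
      then have "inv3 n (u_word s) = inv3 n (gpow GB t)" by (rule conj_inv)
      then show False using assms(4) by (auto simp: u inv3_def sig_gpow)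
    qed
  qed
qed

end
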